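(* Let $z(n)=\frac{1}{n+1}$, $n\in\mathbb{Z}_+$. For every finite sequence $\alpha$, the limit $\lim_{t\to\infty}t\mu(t,z\otimes\alpha)$ exists and equals $\|\alpha\|_1$.
   Context: For sequences $\alpha,\beta$, the tensor product is the double sequence $(\alpha\otimes\beta)(k,l)=\alpha(k)\beta(l)$. For a double sequence (a function on a countable set with counting measure) $x$ tending to zero, $\mu(t,x)$ denotes its decreasing rearrangement, i.e. the non-increasing step function on $(0,\infty)$ equidistributed with $|x|$. $\|\alpha\|_1=\sum_k|\alpha(k)|$. *)

theory Defs
  imports "HOL-Analysis.Analysis"
begin

definition z :: "nat \<Rightarrow> complex" where
  "z n = complex_of_real (1 / (real n + 1))"

definition tensor :: "(nat \<Rightarrow> complex) \<Rightarrow> (nat \<Rightarrow> complex) \<Rightarrow> (nat \<times> nat \<Rightarrow> complex)" where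
  "tensor a b = (\<lambda>(k, l). a k * b l)"

text \<open>Distribution function w.r.t. counting measure: number of indices with |x i| > s
  (only meaningful when this set is finite).\<close>
definition distr :: "('i \<Rightarrow> complex) \<Rightarrow> real \<Rightarrow> nat" where
  "distr x s = card {i. norm (x i) > s}"

definition mu :: "real \<Rightarrow> ('i \<Rightarrow> complex) \<Rightarrow> real" where
  "mu t x = Inf {s. 0 \<le> s \<and> finite {i. norm (x i) > s} \<and> real (distr x s) \<le> t}"

definition l1norm :: "(nat \<Rightarrow> complex) \<Rightarrow> real" where
  "l1norm a = (\<Sum>k. norm (a k))"

end

theory Submission
  imports Defs
begin

lemma set_real_less:
  fixes c :: real
  shows "{k::nat. real k < c} = {..< nat \<lceil>c\<rceil>}"
proof -
  have "real k < c \<longleftrightarrow> k < nat \<lceil>c\<rceil>" for k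
    by (simp add: zless_nat_eq_int_zless less_ceiling_iff)
  then show ?thesis by auto
qed

lemma card_real_less:
  fixes c :: real
  shows "card {k::nat. real k < c} = nat \<lceil>c\<rceil>"
  unfolding set_real_less by simp

lemma norm_tensor_z:
  "norm (tensor z \<alpha> (k, l)) = norm (\<alpha> l) / (real k + 1)"
proof -
  have "complex_of_nat k + 1 = of_nat (Suc k)" by simp
  then have "norm (complex_of_nat k + 1) = real k + 1"
    by (simp only: norm_of_nat)
  then show ?thesis unfolding tensor_def z_def
    by (simp add: norm_mult norm_divide)
qed

lemma distr_bounds:
  fixes \<alpha> :: "nat \<Rightarrow> complex" and s :: real
  assumes fin: "finite {k. \<alpha> k \<noteq> 0}" and s: "s > 0"
  defines "F \<equiv> {k. \<alpha> k \<noteq> 0}"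
  shows "finite {i. norm (tensor z \<alpha> i) > s}"
    and "real (distr (tensor z \<alpha>) s) \<le> (\<Sum>l\<in>F. norm (\<alpha> l)) / s"
    and "(\<Sum>l\<in>F. norm (\<alpha> l)) / s - real (card F) \<le> real (distr (tensor z \<alpha>) s)"
proof -
  define B where "B l = {k::nat. real k < norm (\<alpha> l) / s - 1}" for l
  have finB: "finite (B l)" for l
    unfolding B_def set_real_less by simp
  have eq: "{i. norm (tensor z \<alpha> i) > s} = (\<lambda>(l,k). (k,l)) ` (SIGMA l:F. B l)"
  proof -
    have "norm (\<alpha> l) / (real k + 1) > s \<longleftrightarrow> l \<in> F \<and> real k < norm (\<alpha> l) / s - 1" for k l
    proof -
      have p: "real k + 1 > 0" by simp
      have "norm (\<alpha> l) / (real k + 1) > s \<longleftrightarrow> norm (\<alpha> l) > s * (real k + 1)"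
        using p by (simp add: pos_less_divide_eq mult.commute)
      also have "\<dots> \<longleftrightarrow> real k < norm (\<alpha> l) / s - 1"
        using s by (simp add: field_simps)
      also have "\<dots> \<longleftrightarrow> l \<in> F \<and> real k < norm (\<alpha> l) / s - 1"
      proof (cases "\<alpha> l = 0")
        case True
        then show ?thesis by simp
      next
        case False
        then show ?thesis unfolding F_def by simp
      qed
      finally show ?thesis .
    qed
    then show ?thesis unfolding B_def
      by (auto simp: norm_tensor_z image_iff)
  qed
  have finF: "finite F" using fin F_def by simp
  have inj: "inj_on (\<lambda>(l,k). (k::nat,l::nat)) (SIGMA l:F. B l)"
    by (auto simp: inj_on_def)
  have cardeq: "distr (tensor z \<alpha>) s = (\<Sum>l\<in>F. card (B l))"
    unfolding distr_def eq card_image[OF inj]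
    using finF finB by (simp add: card_SigmaI)
  show "finite {i. norm (tensor z \<alpha> i) > s}"
    unfolding eq using finF finB by auto
  have cB: "real (card (B l)) = real (nat \<lceil>norm (\<alpha> l) / s - 1\<rceil>)" for l
    unfolding B_def card_real_less by simp
  have natle: "real (nat i) = max 0 (real_of_int i)" for i :: int
    by (cases "i \<ge> 0") simp_all
  have up: "real (card (B l)) \<le> norm (\<alpha> l) / s" for l
  proof -
    have "norm (\<alpha> l) / s \<ge> 0" using s by simp
    moreover have "real_of_int \<lceil>norm (\<alpha> l) / s - 1\<rceil> < norm (\<alpha> l) / s"
      using ceiling_correct[of "norm (\<alpha> l) / s - 1"] by linarith
    ultimately show ?thesis unfolding cB natle by linarith
  qed
  have lo: "norm (\<alpha> l) / s - 1 \<le> real (card (B l))" for l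
  proof -
    have "norm (\<alpha> l) / s - 1 \<le> real_of_int \<lceil>norm (\<alpha> l) / s - 1\<rceil>"
      by (rule le_of_int_ceiling)
    then show ?thesis unfolding cB natle by linarith
  qed
  have "real (distr (tensor z \<alpha>) s) = (\<Sum>l\<in>F. real (card (B l)))"
    unfolding cardeq by simp
  moreover have "(\<Sum>l\<in>F. real (card (B l))) \<le> (\<Sum>l\<in>F. norm (\<alpha> l) / s)"
    by (rule sum_mono) (rule up)
  moreover have "(\<Sum>l\<in>F. norm (\<alpha> l) / s - 1) \<le> (\<Sum>l\<in>F. real (card (B l)))"
    by (rule sum_mono) (rule lo)
  ultimately show "real (distr (tensor z \<alpha>) s) \<le> (\<Sum>l\<in>F. norm (\<alpha> l)) / s"
    and "(\<Sum>l\<in>F. norm (\<alpha> l)) / s - real (card F) \<le> real (distr (tensor z \<alpha>) s)"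
    by (simp_all add: sum_divide_distrib sum_subtractf)
qed


lemma mu_bounds:
  fixes \<alpha> :: "nat \<Rightarrow> complex" and t :: real
  assumes fin: "finite {k. \<alpha> k \<noteq> 0}" and t: "t > 0"
    and ne: "{k. \<alpha> k \<noteq> 0} \<noteq> {}"
  defines "F \<equiv> {k. \<alpha> k \<noteq> 0}"
  defines "A \<equiv> (\<Sum>l\<in>F. norm (\<alpha> l))"
  shows "mu t (tensor z \<alpha>) \<le> A / t"
    and "A / (t + real (card F)) \<le> mu t (tensor z \<alpha>)"
proof -
  define S where "S = {s. 0 \<le> s \<and> finite {i. norm (tensor z \<alpha> i) > s} \<and> real (distr (tensor z \<alpha>) s) \<le> t}"
  have finF: "finite F" using fin F_def by simp
  have Fne: "F \<noteq> {}" using ne F_def by simp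
  have Apos: "A > 0" unfolding A_def
    using finF Fne by (intro sum_pos) (auto simp: F_def)
  have mem: "A / t \<in> S"
  proof -
    have s: "A / t > 0" using Apos t by simp
    have "real (distr (tensor z \<alpha>) (A / t)) \<le> A / (A / t)"
      using distr_bounds(2)[OF fin s] unfolding A_def F_def by simp
    also have "\<dots> = t" using Apos t by simp
    finally show ?thesis unfolding S_def using s distr_bounds(1)[OF fin s] by simp
  qed
  have bdd: "bdd_below S" unfolding S_def by (rule bdd_belowI[of _ 0]) auto
  show "mu t (tensor z \<alpha>) \<le> A / t"
    unfolding mu_def S_def[symmetric] by (rule cInf_lower[OF mem bdd])
  show "A / (t + real (card F)) \<le> mu t (tensor z \<alpha>)"
    unfolding mu_def S_def[symmetric]
  proof (rule cInf_greatest)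
    show "S \<noteq> {}" using mem by blast
  next
    fix s assume sS: "s \<in> S"
    have "s \<noteq> 0"
    proof
      assume s0: "s = 0"
      obtain l where l: "\<alpha> l \<noteq> 0" using Fne F_def by auto
      have sub: "range (\<lambda>k. (k, l)) \<subseteq> {i. norm (tensor z \<alpha> i) > s}"
      proof -
        have "norm (\<alpha> l) / (real k + 1) > 0" for k
          by (intro divide_pos_pos) (use l in auto)
        then have "norm (tensor z \<alpha> (k, l)) > s" for k
          using s0 by (simp only: norm_tensor_z)
        then show ?thesis by (simp add: image_subset_iff)
      qed
      have inf: "infinite (range (\<lambda>k::nat. (k, l)))"
        by (rule range_inj_infinite) (auto simp: inj_def)
      have finX: "finite {i. norm (tensor z \<alpha> i) > s}" using sS unfolding S_def by simp
      show False using inf finite_subset[OF sub finX] by simp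
    qed
    then have spos: "s > 0" using sS S_def by auto
    have "A / s - real (card F) \<le> t"
      using distr_bounds(3)[OF fin spos] sS unfolding S_def A_def F_def by simp
    then have "A / s \<le> t + real (card F)" by linarith
    then have "A \<le> (t + real (card F)) * s" by (simp add: pos_divide_le_eq[OF spos])
    then have Ale: "A \<le> s * (t + real (card F))" by (simp add: mult.commute)
    show "A / (t + real (card F)) \<le> s"
    proof -
      have p: "t + real (card F) > 0" using t by linarith
      show ?thesis using Ale by (simp add: pos_divide_le_eq[OF p])
    qed
  qed
qed

theorem lemma4p6:
  fixes \<alpha> :: "nat \<Rightarrow> complex"
  assumes "finite {k. \<alpha> k \<noteq> 0}"
  shows "((\<lambda>t. t * mu t (tensor z \<alpha>)) \<longlongrightarrow> l1norm \<alpha>) at_top"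
proof -
  define F where "F = {k. \<alpha> k \<noteq> 0}"
  define A where "A = (\<Sum>l\<in>F. norm (\<alpha> l))"
  have finF: "finite F" using assms F_def by simp
  have l1: "l1norm \<alpha> = A"
  proof -
    have "l1norm \<alpha> = (\<Sum>k\<in>F. norm (\<alpha> k))"
      unfolding l1norm_def by (rule suminf_finite[OF finF]) (auto simp: F_def)
    then show ?thesis by (simp add: A_def)
  qed
  show ?thesis
  proof (cases "F = {}")
    case True
    then have a0: "\<alpha> k = 0" for k using F_def by auto
    have "eventually (\<lambda>t. t * mu t (tensor z \<alpha>) = 0) at_top"
    proof (rule eventually_at_top_linorderI[of 0])
      fix t :: real assume "t \<ge> 0"
      then have "{s. 0 \<le> s \<and> finite {i. norm (tensor z \<alpha> i) > s} \<and> real (distr (tensor z \<alpha>) s) \<le> t} = {0..}"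
        by (auto simp: a0 tensor_def distr_def)
      then show "t * mu t (tensor z \<alpha>) = 0" unfolding mu_def by simp
    qed
    moreover have "A = 0" using True A_def by simp
    ultimately show ?thesis unfolding l1 by (simp add: tendsto_eventually)
  next
    case False
    let ?m = "real (card F)"
    have lim: "((\<lambda>t. A * (t / (t + ?m))) \<longlongrightarrow> A * 1) at_top"
    proof (rule tendsto_mult[OF tendsto_const])
      have "((\<lambda>t. 1 / (1 + ?m * inverse t)) \<longlongrightarrow> 1 / (1 + ?m * 0)) at_top"
        by (intro tendsto_intros tendsto_inverse_0_at_top filterlim_ident) simp
      moreover have "eventually (\<lambda>t. 1 / (1 + ?m * inverse t) = t / (t + ?m)) at_top"
      proof (rule eventually_at_top_linorderI[of 1])
        fix t :: real assume t: "t \<ge> 1"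
        have tn: "t \<noteq> 0" using t by simp
        have "(t + ?m) / t = 1 + ?m * inverse t" using tn by (simp add: distrib_right divide_inverse)
        then show "1 / (1 + ?m * inverse t) = t / (t + ?m)"
          by (metis divide_divide_eq_right div_by_1 mult.commute)
      qed
      ultimately show "((\<lambda>t. t / (t + ?m)) \<longlongrightarrow> 1) at_top"
        using tendsto_cong by fastforce
    qed
    have lo: "eventually (\<lambda>t. A * (t / (t + ?m)) \<le> t * mu t (tensor z \<alpha>)) at_top"
    proof (rule eventually_at_top_linorderI[of 1])
      fix t :: real assume t: "t \<ge> 1"
      have "A / (t + ?m) \<le> mu t (tensor z \<alpha>)"
        using mu_bounds(2)[OF assms _ ] t False unfolding A_def F_def by simp
      then have "t * (A / (t + ?m)) \<le> t * mu t (tensor z \<alpha>)"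
        using t by (intro mult_left_mono) auto
      then show "A * (t / (t + ?m)) \<le> t * mu t (tensor z \<alpha>)" by (simp add: mult.commute)
    qed
    have up: "eventually (\<lambda>t. t * mu t (tensor z \<alpha>) \<le> A) at_top"
    proof (rule eventually_at_top_linorderI[of 1])
      fix t :: real assume t: "t \<ge> 1"
      have "mu t (tensor z \<alpha>) \<le> A / t"
        using mu_bounds(1)[OF assms _ ] t False unfolding A_def F_def by simp
      then have "t * mu t (tensor z \<alpha>) \<le> t * (A / t)"
        using t by (intro mult_left_mono) auto
      then show "t * mu t (tensor z \<alpha>) \<le> A" using t by simp
    qed
    show ?thesis unfolding l1
      by (rule tendsto_sandwich[OF lo up lim[unfolded mult_1_right] tendsto_const])
  qed
qed

end
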